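(* Let $D=\mathrm{diag}(d_1,\dots,d_n)\in\mathbb{D}^n_+$, $W\in\mathbb{R}^{n\times n}$, $u\in\mathbb{R}^n$, $A:=W-D$ with rows $A_i^\top$, and $\mathcal X=\{x\in\mathbb{R}^n: Dx\in[0,1]^n\}$. For $\tau>0$ let $F_\tau(x)=-Dx+[Dx+\tau(Ax+u)]_0^1$, and define $F_\infty:\mathcal X\to\mathbb{R}^n$ componentwise by $$(F_\infty(x))_i=\begin{cases}-d_ix_i, & A_i^\top x+u_i<0,\\ 0, & A_i^\top x+u_i=0,\\ 1-d_ix_i, & A_i^\top x+u_i>0.\end{cases}$$ Then: (i) for each $x\in\mathcal X$, $\lim_{\tau\to+\infty}F_\tau(x)=F_\infty(x)$; (ii) if $\det A\neq0$, then the Filippov regularization of $F_\infty$ satisfies $\operatorname{F}[F_\infty](x)=-Dx+\mathcal H(Ax+u)$ for every $x\in\mathcal X$.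
   Context: $\mathbb{D}^n_+$ is the set of positive diagonal matrices; $[z]_0^1=\max(0,\min(z,1))$ elementwise. The map $h:\mathbb{R}\to 2^{[0,1]}$ is $h(z)=\{0\}$ if $z<0$, $[0,1]$ if $z=0$, $\{1\}$ if $z>0$, and $\mathcal H(x)=h(x_1)\times\cdots\times h(x_n)\subseteq[0,1]^n$. The Filippov regularization of a vector field $X$ is $\operatorname{F}[X](x)=\bigcap_{\delta>0}\bigcap_{\mu(S)=0}\overline{\mathrm{co}}\{X(B(x,\delta)\setminus S)\}$, where $\mu$ is Lebesgue measure, $B(x,\delta)$ the open ball, and $\overline{\mathrm{co}}$ the closed convex hull. *)

theory Defs
  imports "HOL-Analysis.Analysis"
begin

definition diag_mat :: "real^'n \<Rightarrow> real^'n^'n" where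
  "diag_mat d = (\<chi> i j. if i = j then d $ i else 0)"

definition clip01 :: "real^'n \<Rightarrow> real^'n" where
  "clip01 z = (\<chi> i. max 0 (min (z $ i) 1))"

definition hset :: "real \<Rightarrow> real set" where
  "hset z = (if z < 0 then {0} else if z = 0 then {0..1} else {1})"

definition Hset :: "real^'n \<Rightarrow> (real^'n) set" where
  "Hset x = {v. \<forall>i. v $ i \<in> hset (x $ i)}"

definition filippov :: "(real^'n \<Rightarrow> real^'n) \<Rightarrow> real^'n \<Rightarrow> (real^'n) set" where
  "filippov X x = (\<Inter>\<delta>\<in>{\<delta>. \<delta> > 0}. \<Inter>S\<in>{S. S \<in> null_sets lebesgue}.
      closure (convex hull (X ` (ball x \<delta> - S))))"

definition dom_X :: "real^'n \<Rightarrow> (real^'n) set" where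
  "dom_X d = {x. \<forall>i. 0 \<le> (diag_mat d *v x) $ i \<and> (diag_mat d *v x) $ i \<le> 1}"

definition F_tau :: "real^'n \<Rightarrow> real^'n^'n \<Rightarrow> real^'n \<Rightarrow> real \<Rightarrow> real^'n \<Rightarrow> real^'n" where
  "F_tau d W u \<tau> x = - (diag_mat d *v x)
     + clip01 (diag_mat d *v x + \<tau> *\<^sub>R ((W - diag_mat d) *v x + u))"

text \<open>F_infinity, given by the componentwise formula (stated on all of R^n;
  the theorem only evaluates it / its Filippov regularization at points of \<X>).\<close>
definition F_inf :: "real^'n \<Rightarrow> real^'n^'n \<Rightarrow> real^'n \<Rightarrow> real^'n \<Rightarrow> real^'n" where
  "F_inf d W u x = (\<chi> i. let s = ((W - diag_mat d) *v x + u) $ i in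
      if s < 0 then - (d $ i * x $ i) else if s = 0 then 0 else 1 - d $ i * x $ i)"

end

theory Submission
  imports Defs
begin

lemma diag_comp: "(diag_mat d *v y) $ i = d $ i * y $ i"
proof -
  have "(diag_mat d *v y) $ i = (\<Sum>j\<in>UNIV. if i = j then d$j * y$j else 0)"
    unfolding diag_mat_def matrix_vector_mult_def vec_lambda_beta by (rule sum.cong) auto
  then show ?thesis by simp
qed

lemma part1:
  fixes d u x :: "real^'n" and W :: "real^'n^'n"
  assumes "x \<in> dom_X d"
  shows "((\<lambda>\<tau>. F_tau d W u \<tau> x) \<longlongrightarrow> F_inf d W u x) at_top"
proof (rule vec_tendstoI)
  fix i
  define s where "s = ((W - diag_mat d) *v x + u) $ i"
  define a where "a = d $ i * x $ i"
  have a01: "0 \<le> a" "a \<le> 1" using assms unfolding dom_X_def a_def by (auto simp: diag_comp)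
  have Fi: "F_tau d W u \<tau> x $ i = - a + max 0 (min (a + \<tau> * s) 1)" for \<tau>
    unfolding F_tau_def clip01_def s_def a_def by (simp add: diag_comp)
  have Gi: "F_inf d W u x $ i = (if s < 0 then - a else if s = 0 then 0 else 1 - a)"
    unfolding F_inf_def s_def a_def Let_def by simp
  show "((\<lambda>\<tau>. F_tau d W u \<tau> x $ i) \<longlongrightarrow> F_inf d W u x $ i) at_top"
  proof (cases "s < 0")
    case True
    have "eventually (\<lambda>\<tau>. F_tau d W u \<tau> x $ i = - a) at_top"
    proof (rule eventually_at_top_linorderI[of "a / (- s) + 1"])
      fix \<tau> assume h: "\<tau> \<ge> a / (- s) + 1"
      have "(a / (- s) + 1) * (- s) \<le> \<tau> * (- s)" using h True by (intro mult_right_mono) auto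
      moreover have "(a / (- s) + 1) * (- s) = a - s" using True by (simp add: field_simps)
      ultimately have "a - s \<le> \<tau> * (- s)" by simp
      then have "a + \<tau> * s \<le> 0" using True by (simp add: algebra_simps)
      then have "max 0 (min (a + \<tau> * s) 1) = 0" by (simp add: max_def min_def)
      then show "F_tau d W u \<tau> x $ i = - a" unfolding Fi by simp
    qed
    then show ?thesis using True Gi by (simp add: tendsto_eventually)
  next
    case False
    show ?thesis
    proof (cases "s = 0")
      case True
      then show ?thesis using Fi Gi a01 by simp
    next
      case F2: False
      with False have sp: "s > 0" by simp
      have "eventually (\<lambda>\<tau>. F_tau d W u \<tau> x $ i = 1 - a) at_top"
      proof (rule eventually_at_top_linorderI[of "1 / s"])
        fix \<tau> assume h: "\<tau> \<ge> 1 / s"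
        have "\<tau> * s \<ge> (1 / s) * s" using h sp by (intro mult_right_mono) auto
        then have "a + \<tau> * s \<ge> 1" using sp a01 by simp
        then have "max 0 (min (a + \<tau> * s) 1) = 1" by (simp add: max_def min_def)
        then show "F_tau d W u \<tau> x $ i = 1 - a" unfolding Fi by simp
      qed
      then show ?thesis using sp Gi by (simp add: tendsto_eventually)
    qed
  qed
qed

lemma cont_comp:
  fixes A :: "real^'n^'n"
  shows "((\<lambda>y. (A *v y + u) $ i) \<longlongrightarrow> (A *v x + u) $ i) (nhds x)"
proof -
  have "((\<lambda>y. A *v y) \<longlongrightarrow> A *v x) (nhds x)"
    by (rule bounded_linear.tendsto[OF matrix_vector_mul_bounded_linear filterlim_ident])
  then show ?thesis by (intro tendsto_vec_nth tendsto_add tendsto_const)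
qed

lemma cont_D:
  fixes e d :: "real^'n"
  shows "((\<lambda>y. -(diag_mat d *v y) + e) \<longlongrightarrow> -(diag_mat d *v x) + e) (nhds x)"
proof -
  have "((\<lambda>y. diag_mat d *v y) \<longlongrightarrow> diag_mat d *v x) (nhds x)"
    by (rule bounded_linear.tendsto[OF matrix_vector_mul_bounded_linear filterlim_ident])
  then show ?thesis by (intro tendsto_minus tendsto_add tendsto_const)
qed

lemma unit_hull_cart:
  "cbox (0::real^'n) 1 = convex hull {x. \<forall>i. (x$i = 0) \<or> (x$i = 1)}"
  unfolding Cart_1 unit_interval_convex_hull[where 'a="real^'n"] box_real[symmetric]
  by (rule arg_cong[where f="\<lambda>x. convex hull x"]) (simp add: Basis_vec_def inner_axis)

lemma box_hull:
  fixes lo hi :: "real^'n"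
  assumes "\<forall>i. lo$i \<le> hi$i"
  shows "cbox lo hi \<subseteq> convex hull {v. \<forall>i. v$i = lo$i \<or> v$i = hi$i}"
proof
  fix z assume z: "z \<in> cbox lo hi"
  define L where "L = (\<lambda>t::real^'n. \<chi> i. (hi$i - lo$i) * t$i)"
  have lin: "linear L" unfolding L_def
    by (rule linearI) (auto simp: vec_eq_iff algebra_simps)
  define V0 where "V0 = {x::real^'n. \<forall>i. (x$i = 0) \<or> (x$i = 1)}"
  define t where "t = (\<chi> i. if hi$i = lo$i then 0 else (z$i - lo$i) / (hi$i - lo$i))"
  have zi: "lo$i \<le> z$i \<and> z$i \<le> hi$i" for i using z by (simp add: mem_box_cart)
  have "t \<in> cbox 0 1"
    unfolding mem_box_cart t_def using zi assms by (auto simp: divide_simps) (metis antisym_conv2)+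
  then have "t \<in> convex hull V0" unfolding V0_def unit_hull_cart .
  then have "lo + L t \<in> (+) lo ` L ` (convex hull V0)" by blast
  also have "\<dots> = convex hull ((+) lo ` L ` V0)"
    by (simp add: convex_hull_linear_image[OF lin] convex_hull_translation)
  also have "\<dots> \<subseteq> convex hull {v. \<forall>i. v$i = lo$i \<or> v$i = hi$i}"
    by (rule hull_mono) (auto simp: V0_def L_def)
  finally show "z \<in> convex hull {v. \<forall>i. v$i = lo$i \<or> v$i = hi$i}"
  proof -
    have "lo + L t = z" unfolding L_def t_def vec_eq_iff using zi
      by (auto simp: field_simps) (metis antisym)
    then show "lo + L t \<in> convex hull {v. \<forall>i. v$i = lo$i \<or> v$i = hi$i} \<Longrightarrow> ?thesis" by simp
  qed
qed


lemma F_inf_comp: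
  "F_inf d W u y $ i = (if ((W - diag_mat d) *v y + u) $ i < 0 then - (d$i * y$i)
     else if ((W - diag_mat d) *v y + u) $ i = 0 then 0 else 1 - d$i * y$i)"
  unfolding F_inf_def Let_def by simp

lemma Hset_image:
  fixes d x s :: "real^'n"
  shows "(\<lambda>v. - (diag_mat d *v x) + v) ` Hset s =
    cbox (\<chi> i. -(d$i*x$i) + (if s$i > 0 then 1 else 0)) (\<chi> i. -(d$i*x$i) + (if s$i < 0 then 0 else 1))"
  (is "?L = cbox ?lo ?hi")
proof
  show "(\<lambda>v. - (diag_mat d *v x) + v) ` Hset s \<subseteq> cbox ?lo ?hi"
    by (auto simp: Hset_def hset_def mem_box_cart diag_comp split: if_splits)
next
  show "cbox ?lo ?hi \<subseteq> (\<lambda>v. - (diag_mat d *v x) + v) ` Hset s"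
  proof
    fix z assume z: "z \<in> cbox (\<chi> i. -(d$i*x$i) + (if s$i > 0 then 1 else 0)) (\<chi> i. -(d$i*x$i) + (if s$i < 0 then 0 else 1))"
    have "z + diag_mat d *v x \<in> Hset s"
      unfolding Hset_def
    proof (intro CollectI allI)
      fix i
      have "-(d$i*x$i) + (if s$i > 0 then 1 else 0) \<le> z$i" "z$i \<le> -(d$i*x$i) + (if s$i < 0 then 0 else 1)"
        using z unfolding mem_box_cart by auto
      then show "(z + diag_mat d *v x) $ i \<in> hset (s $ i)"
        unfolding hset_def by (cases "s$i < 0"; cases "s$i = 0") (auto simp: diag_comp)
    qed
    then show "z \<in> (\<lambda>v. - (diag_mat d *v x) + v) ` Hset s"
      by (intro image_eqI[of _ _ "z + diag_mat d *v x"]) auto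
  qed
qed


lemma upper:
  fixes d u x z :: "real^'n" and W :: "real^'n^'n"
  defines "s \<equiv> (\<lambda>y. (W - diag_mat d) *v y + u)"
  assumes x: "x \<in> dom_X d" and z: "z \<in> filippov (F_inf d W u) x"
  shows "z \<in> cbox (\<chi> i. -(d$i*x$i) + (if s x$i > 0 then 1 else 0)) (\<chi> i. -(d$i*x$i) + (if s x$i < 0 then 0 else 1))"
proof -
  define lo where "lo = (\<chi> i. -(d$i*x$i) + (if s x$i > 0 then 1 else (0::real)))"
  define hi where "hi = (\<chi> i. -(d$i*x$i) + (if s x$i < 0 then 0 else (1::real)))"
  have a01: "0 \<le> d$i*x$i" "d$i*x$i \<le> 1" for i using x unfolding dom_X_def by (auto simp: diag_comp)
  have key: "lo$i - \<epsilon> \<le> z$i \<and> z$i \<le> hi$i + \<epsilon>" if ep: "\<epsilon> > 0" for \<epsilon> i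
  proof -
    have "\<forall>\<^sub>F y in nhds x. \<forall>i. (s x$i < 0 \<longrightarrow> s y$i < 0) \<and> (s x$i > 0 \<longrightarrow> s y$i > 0)
         \<and> dist (d$i * y$i) (d$i * x$i) < \<epsilon>"
    proof (rule eventually_all_finite, intro allI eventually_conj)
      fix i
      have c: "((\<lambda>y. s y $ i) \<longlongrightarrow> s x $ i) (nhds x)" unfolding s_def by (rule cont_comp)
      show "\<forall>\<^sub>F y in nhds x. s x$i < 0 \<longrightarrow> s y$i < 0"
        using order_tendstoD(2)[OF c, of 0] by (cases "s x$i < 0") auto
      show "\<forall>\<^sub>F y in nhds x. s x$i > 0 \<longrightarrow> s y$i > 0"
        using order_tendstoD(1)[OF c, of 0] by (cases "s x$i > 0") auto
      have "((\<lambda>y. d$i * y$i) \<longlongrightarrow> d$i * x$i) (nhds x)"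
        by (intro tendsto_mult_left tendsto_vec_nth filterlim_ident)
      then show "\<forall>\<^sub>F y in nhds x. dist (d$i * y$i) (d$i * x$i) < \<epsilon>"
        using tendstoD ep by blast
    qed
    then obtain \<delta> where dp: "\<delta> > 0" and P: "\<And>y. dist y x < \<delta> \<Longrightarrow> \<forall>i. (s x$i < 0 \<longrightarrow> s y$i < 0) \<and> (s x$i > 0 \<longrightarrow> s y$i > 0)
         \<and> dist (d$i * y$i) (d$i * x$i) < \<epsilon>"
      unfolding eventually_nhds_metric by blast
    define T where "T = cbox (lo - (\<chi> i. \<epsilon>)) (hi + (\<chi> i. \<epsilon>))"
    have sub: "F_inf d W u ` (ball x \<delta> - {}) \<subseteq> T"
    proof
      fix w assume "w \<in> F_inf d W u ` (ball x \<delta> - {})"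
      then obtain y where y: "dist y x < \<delta>" and w: "w = F_inf d W u y"
        by (auto simp: dist_commute) blast
      show "w \<in> T" unfolding T_def mem_box_cart
      proof
        fix j
        have Pj: "(s x$j < 0 \<longrightarrow> s y$j < 0) \<and> (s x$j > 0 \<longrightarrow> s y$j > 0)
           \<and> \<bar>d$j * y$j - d$j * x$j\<bar> < \<epsilon>" using P[OF y] by (simp add: dist_real_def)
        have wj: "w$j = (if s y $ j < 0 then - (d$j * y$j) else if s y $ j = 0 then 0 else 1 - d$j * y$j)"
          unfolding w s_def by (rule F_inf_comp)
        show "(lo - (\<chi> i. \<epsilon>)) $ j \<le> w $ j \<and> w $ j \<le> (hi + (\<chi> i. \<epsilon>)) $ j"
          unfolding lo_def hi_def wj using Pj a01[of j]
          by (cases "s x$j < 0"; cases "s x$j > 0"; cases "s y$j < 0"; cases "s y$j = 0") (auto simp: abs_if split: if_splits)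
      qed
    qed
    have "z \<in> closure (convex hull (F_inf d W u ` (ball x \<delta> - {})))"
      using z dp unfolding filippov_def by (auto dest!: bspec[of _ _ "{}"])
    also have "\<dots> \<subseteq> T"
      by (intro closure_minimal hull_minimal sub) (simp_all add: T_def convex_box closed_cbox)
    finally show ?thesis unfolding T_def mem_box_cart by auto
  qed
  have "lo$i \<le> z$i \<and> z$i \<le> hi$i" for i
  proof (rule ccontr)
    assume "\<not> ?thesis"
    then have "lo$i - z$i > 0 \<or> z$i - hi$i > 0" by auto
    then show False
    proof
      assume h: "lo$i - z$i > 0"
      from key[OF half_gt_zero[OF h], of i] h show False by (auto simp: field_simps)
    next
      assume h: "z$i - hi$i > 0"
      from key[OF half_gt_zero[OF h], of i] h show False by (auto simp: field_simps)
    qed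
  qed
  then show ?thesis unfolding mem_box_cart lo_def[symmetric] hi_def[symmetric] by auto
qed


lemma vertex_in:
  fixes d u x v :: "real^'n" and W :: "real^'n^'n"
  defines "s \<equiv> (\<lambda>y. (W - diag_mat d) *v y + u)"
  assumes det: "det (W - diag_mat d) \<noteq> 0" and dp: "\<delta> > 0" and S: "S \<in> null_sets lebesgue"
    and v: "\<forall>i. v$i = -(d$i*x$i) + (if s x$i > 0 then 1 else 0) \<or> v$i = -(d$i*x$i) + (if s x$i < 0 then 0 else 1)"
  shows "v \<in> closure (F_inf d W u ` (ball x \<delta> - S))"
proof -
  define A where "A = W - diag_mat d"
  obtain B where AB: "A ** B = mat 1" using det invertible_det_nz[of A] unfolding invertible_def A_def by blast
  define e where "e = v + diag_mat d *v x"
  have e01: "e$i = (if s x$i > 0 then 1 else 0) \<or> e$i = (if s x$i < 0 then 0 else 1)" for i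
    using v[rule_format, of i] unfolding e_def by (auto simp: diag_comp)
  define w where "w = (\<chi> i. if s x$i = 0 then (if e$i = 1 then 1 else -1) else (0::real))"
  define p where "p = B *v w"
  have Ap: "A *v p = w" unfolding p_def by (simp add: matrix_vector_mul_assoc AB)
  have ve: "-(diag_mat d *v x) + e = v" unfolding e_def by simp
  show ?thesis
    unfolding closure_approachable
  proof (intro allI impI)
    fix \<epsilon> :: real assume ep: "\<epsilon> > 0"
    have "\<forall>\<^sub>F y in nhds x. dist (-(diag_mat d *v y) + e) v < \<epsilon>"
      using tendstoD[OF cont_D[of d e x] ep] ve by simp
    moreover have "\<forall>\<^sub>F y in nhds x. \<forall>i. (s x$i < 0 \<longrightarrow> s y$i < 0) \<and> (s x$i > 0 \<longrightarrow> s y$i > 0)"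
    proof (rule eventually_all_finite, intro allI eventually_conj)
      fix i
      have c: "((\<lambda>y. s y $ i) \<longlongrightarrow> s x $ i) (nhds x)" unfolding s_def by (rule cont_comp)
      show "\<forall>\<^sub>F y in nhds x. s x$i < 0 \<longrightarrow> s y$i < 0"
        using order_tendstoD(2)[OF c, of 0] by (cases "s x$i < 0") auto
      show "\<forall>\<^sub>F y in nhds x. s x$i > 0 \<longrightarrow> s y$i > 0"
        using order_tendstoD(1)[OF c, of 0] by (cases "s x$i > 0") auto
    qed
    ultimately have "\<forall>\<^sub>F y in nhds x. dist (-(diag_mat d *v y) + e) v < \<epsilon> \<and>
       (\<forall>i. (s x$i < 0 \<longrightarrow> s y$i < 0) \<and> (s x$i > 0 \<longrightarrow> s y$i > 0))"
      by (rule eventually_conj)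
    then obtain r0 where r0: "r0 > 0" and P: "\<And>y. dist y x < r0 \<Longrightarrow> dist (-(diag_mat d *v y) + e) v < \<epsilon> \<and>
       (\<forall>i. (s x$i < 0 \<longrightarrow> s y$i < 0) \<and> (s x$i > 0 \<longrightarrow> s y$i > 0))"
      unfolding eventually_nhds_metric by blast
    define r where "r = min r0 \<delta>"
    have r: "r > 0" "r \<le> r0" "r \<le> \<delta>" using r0 dp by (auto simp: r_def)
    define t where "t = r / (2 * (norm p + 1))"
    have "0 < 2 * (norm p + 1)" by (smt (verit) norm_ge_zero)
    then have tp: "t > 0" unfolding t_def using r by simp
    define y0 where "y0 = x + t *\<^sub>R p"
    have "dist y0 x = t * norm p" unfolding y0_def dist_norm using tp by simp
    also have "\<dots> < r"
    proof -
      have "t * norm p \<le> t * (norm p + 1)" using tp by simp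
      also have "\<dots> = r / 2" proof - have "norm p + 1 > 0" by (smt (verit) norm_ge_zero) then show ?thesis unfolding t_def by (simp add: field_simps) qed
      finally show ?thesis using r by simp
    qed
    finally have y0r: "dist y0 x < r" .
    have sy0: "s y0 = s x + t *\<^sub>R w"
      unfolding s_def y0_def A_def[symmetric] by (simp add: matrix_vector_right_distrib matrix_vector_mult_scaleR Ap)
    define Q where "Q = (\<lambda>y. \<forall>i. s x$i = 0 \<longrightarrow> (e$i = 1 \<longrightarrow> s y$i > 0) \<and> (e$i \<noteq> 1 \<longrightarrow> s y$i < 0))"
    have Qy0: "Q y0" unfolding Q_def sy0 w_def using tp by auto
    have "\<forall>\<^sub>F y in nhds y0. Q y"
      unfolding Q_def
    proof (rule eventually_all_finite)
      fix i
      have c: "((\<lambda>y. s y $ i) \<longlongrightarrow> s y0 $ i) (nhds y0)" unfolding s_def by (rule cont_comp)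
      show "\<forall>\<^sub>F y in nhds y0. s x$i = 0 \<longrightarrow> (e$i = 1 \<longrightarrow> s y$i > 0) \<and> (e$i \<noteq> 1 \<longrightarrow> s y$i < 0)"
        using order_tendstoD(1)[OF c, of 0] order_tendstoD(2)[OF c, of 0] Qy0[unfolded Q_def, rule_format, of i]
        by (cases "s x$i = 0"; cases "e$i = 1") auto
    qed
    moreover have "\<forall>\<^sub>F y in nhds y0. dist y x < r"
    proof -
      have "((\<lambda>y. dist y x) \<longlongrightarrow> dist y0 x) (nhds y0)"
        by (intro tendsto_dist filterlim_ident tendsto_const)
      then show ?thesis using order_tendstoD(2) y0r by blast
    qed
    ultimately have "\<forall>\<^sub>F y in nhds y0. Q y \<and> dist y x < r" by (rule eventually_conj)
    then obtain r2 where r2: "r2 > 0" and R2: "\<And>y. dist y y0 < r2 \<Longrightarrow> Q y \<and> dist y x < r"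
      unfolding eventually_nhds_metric by blast
    have "\<not> negligible (ball y0 r2)" using r2 by (intro open_not_negligible) auto
    moreover have "negligible S" using S by (simp add: negligible_iff_null_sets)
    ultimately have "\<not> ball y0 r2 \<subseteq> S" using negligible_subset by blast
    then obtain y where yb: "y \<in> ball y0 r2" and yS: "y \<notin> S" by blast
    have Qy: "Q y" and yx: "dist y x < r" using R2[of y] yb by (auto simp: dist_commute)
    have Py: "dist (-(diag_mat d *v y) + e) v < \<epsilon>" and
      sg: "\<And>i. (s x$i < 0 \<longrightarrow> s y$i < 0) \<and> (s x$i > 0 \<longrightarrow> s y$i > 0)"
      using P[of y] yx r by auto
    have Fy: "F_inf d W u y = -(diag_mat d *v y) + e"
    proof (rule vec_eq_iff[THEN iffD2, rule_format])
      fix i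
      have "F_inf d W u y $ i = (if s y $ i < 0 then - (d$i * y$i) else if s y $ i = 0 then 0 else 1 - d$i * y$i)"
        unfolding s_def by (rule F_inf_comp)
      then show "F_inf d W u y $ i = (-(diag_mat d *v y) + e) $ i"
        using sg[of i] Qy[unfolded Q_def, rule_format, of i] e01[of i]
        by (cases "s x$i < 0"; cases "s x$i = 0"; cases "e$i = 1") (auto simp: diag_comp)
    qed
    show "\<exists>y\<in>F_inf d W u ` (ball x \<delta> - S). dist y v < \<epsilon>"
    proof (intro bexI)
      show "dist (F_inf d W u y) v < \<epsilon>" using Fy Py by simp
      show "F_inf d W u y \<in> F_inf d W u ` (ball x \<delta> - S)"
        using yx r yS by (auto simp: dist_commute)
    qed
  qed
qed


theorem proposition5:
  fixes d u :: "real^'n" and W :: "real^'n^'n"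
  assumes "\<forall>i. d $ i > 0"
  shows "(\<forall>x \<in> dom_X d. ((\<lambda>\<tau>. F_tau d W u \<tau> x) \<longlongrightarrow> F_inf d W u x) at_top)
       \<and> (det (W - diag_mat d) \<noteq> 0 \<longrightarrow>
            (\<forall>x \<in> dom_X d. filippov (F_inf d W u) x
               = (\<lambda>v. - (diag_mat d *v x) + v) ` Hset ((W - diag_mat d) *v x + u)))"
proof (intro conjI impI ballI)
  fix x assume "x \<in> dom_X d"
  then show "((\<lambda>\<tau>. F_tau d W u \<tau> x) \<longlongrightarrow> F_inf d W u x) at_top" by (rule part1)
next
  fix x assume x: "x \<in> dom_X d" and det: "det (W - diag_mat d) \<noteq> 0"
  define s where "s = (\<lambda>y. (W - diag_mat d) *v y + u)"
  define lo where "lo = (\<chi> i. -(d$i*x$i) + (if s x$i > 0 then 1 else (0::real)))"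
  define hi where "hi = (\<chi> i. -(d$i*x$i) + (if s x$i < 0 then 0 else (1::real)))"
  have img: "(\<lambda>v. - (diag_mat d *v x) + v) ` Hset ((W - diag_mat d) *v x + u) = cbox lo hi"
    unfolding lo_def hi_def s_def by (rule Hset_image)
  have up: "filippov (F_inf d W u) x \<subseteq> cbox lo hi"
    using upper[OF x] unfolding lo_def hi_def s_def by blast
  have low: "cbox lo hi \<subseteq> filippov (F_inf d W u) x"
  proof
    fix z assume z: "z \<in> cbox lo hi"
    show "z \<in> filippov (F_inf d W u) x"
      unfolding filippov_def
    proof (intro InterI, clarsimp)
      fix \<delta> :: real and S assume dp: "\<delta> > 0" and S: "(S::(real^'n) set) \<in> null_sets lebesgue"
      let ?C = "closure (convex hull (F_inf d W u ` (ball x \<delta> - S)))"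
      have "{v. \<forall>i. v$i = lo$i \<or> v$i = hi$i} \<subseteq> closure (F_inf d W u ` (ball x \<delta> - S))"
      proof
        fix v assume "v \<in> {v. \<forall>i. v$i = lo$i \<or> v$i = hi$i}"
        then have "\<forall>i. v$i = -(d$i*x$i) + (if s x$i > 0 then 1 else 0) \<or> v$i = -(d$i*x$i) + (if s x$i < 0 then 0 else 1)"
          unfolding lo_def hi_def by simp
        then show "v \<in> closure (F_inf d W u ` (ball x \<delta> - S))"
          unfolding s_def by (rule vertex_in[OF det dp S])
      qed
      also have "\<dots> \<subseteq> ?C" by (intro closure_mono hull_subset)
      finally have "convex hull {v. \<forall>i. v$i = lo$i \<or> v$i = hi$i} \<subseteq> ?C"
        by (intro hull_minimal convex_closure convex_convex_hull)
      moreover have "cbox lo hi \<subseteq> convex hull {v. \<forall>i. v$i = lo$i \<or> v$i = hi$i}"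
        by (rule box_hull) (simp add: lo_def hi_def)
      ultimately show "z \<in> ?C" using z by blast
    qed
  qed
  show "filippov (F_inf d W u) x = (\<lambda>v. - (diag_mat d *v x) + v) ` Hset ((W - diag_mat d) *v x + u)"
    using up low img by blast
qed

end
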